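(* Let $F[n,x]$ be a formula of ZF$\varepsilon$ with parameters, and let $G,U\in\Lambda$ satisfy $G\Vdash\forall n\,\neg\forall x\,\neg F[n,x]$ and $U\Vdash\forall f\,\neg\forall n^{\mathbb N}F[n,f[n]]$. Put $H=\Psi GU$. Let $k\in\mathbb N$ and $\phi\in\Lambda$ be such that for every $i<k$ there is a set $a_i$ with $\phi\underline i\Vdash F[i,a_i]$. If $H\underline k\,\phi\not\Vdash\bot$, then there exist a set $a_k$ and a term $\zeta_{k,\phi}\in\Lambda$ such that $\zeta_{k,\phi}\Vdash F[k,a_k]$ and $(H\underline k^+)(\chi)\underline k\,\phi\,\zeta_{k,\phi}\not\Vdash\bot$, where $\underline k^+=(\sigma)\underline k$.
   Context: Fix an integer $N\ge 0$. The set $\Lambda$ of terms is the smallest set containing the constants $B,C,I,K,W,cc,A$ and $p,q_0,\dots,q_N$, closed under application $(\xi)\eta$ (written $\xi\eta$), and containing, for each sequence $(\xi_i)_{i\in\mathbb N}$ of closed terms (no occurrence of $p,q_0,\dots,q_N$), a constant $\bigwedge_i\xi_i$ (injectively, well-founded). Stacks: finite sequences $t_0\cdot\ldots\cdot t_{n-1}\cdot\pi_0$ of terms, $\pi_0$ the empty stack; $\Pi$ the set of stacks. $\ell_t=((C)(B)CB)t$, $k_{\pi_0}=A$, $k_{t\cdot\pi}=(\ell_t)k_\pi$; $\sigma=(BW)(C)(B)BB$, $\underline0=(K)I$, $\underline{n+1}=(\sigma)\underline n$. Execution $\succ$: least preorder on $\Lambda\times\Pi$ with $(\xi)\eta\star\pi\succ\xi\star\eta\cdot\pi$;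 $B\star\xi\cdot\eta\cdot\zeta\cdot\pi\succ\xi\star(\eta)\zeta\cdot\pi$; $C\star\xi\cdot\eta\cdot\zeta\cdot\pi\succ\xi\star\zeta\cdot\eta\cdot\pi$; $I\star\xi\cdot\pi\succ\xi\star\pi$; $K\star\xi\cdot\eta\cdot\pi\succ\xi\star\pi$; $W\star\xi\cdot\eta\cdot\pi\succ\xi\star\eta\cdot\eta\cdot\pi$; $cc\star\xi\cdot\pi\succ\xi\star k_\pi\cdot\pi$; $A\star\xi\cdot\pi\succ\xi\star\pi_0$; $\bigwedge_i\xi_i\star\underline n\cdot\pi\succ\xi_n\star\pi$. Pole $\perp\!\!\!\perp=\{\xi\star\pi:\exists\varpi,\ \xi\star\pi\succ p\star\varpi\}$. $\lambda$-terms are translated into terms by the usual combinatory translation. Let $\mathbf0=\lambda x\lambda y\,y$, $\mathbf1=\lambda x\lambda y\,x$, $\mathsf a=\lambda x\lambda y\,yx$, $(i<k)=((k\mathsf a)\lambda d\,\mathbf0)(i\mathsf a)\lambda d\,\mathbf1$, $\chi=\lambda k\lambda f\lambda z\lambda i((i<k)(f)i)z$, $k^+=(\sigma)k$, $X=\lambda x\lambda f(f)(x)xf$, $Y=XX$, $\Psi=\lambda g\lambda u(Y)\lambda h\lambda k\lambda f(u)(\chi kf)(g)\lambda z(hk^+)(\chi)kfz$. Realizability is Krivine's classical realizability for ZF$\varepsilon$ over a ground model of ZF: $\xi\Vdash F$ iff $\xi\star\pi\in\perp\!\!\!\perp$ for all $\pi\in\|F\|$; $\|\bot\|=\Pi$,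 $\|A\to B\|=\{\eta\cdot\pi:\eta\Vdash A,\pi\in\|B\|\}$, $\|\forall xF[x]\|=\bigcup_a\|F[a]\|$, $\neg A$ is $A\to\bot$, $\|\forall n^{\mathbb N}F[n]\|=\{\underline n\cdot\pi:n\in\mathbb N,\pi\in\|F[n]\|\}$; $\xi\not\Vdash F$ means $\xi\Vdash F$ fails. $f[n]=\mathrm{app}(f,n)=\{y:(n,y)\in f\}$. *)

theory Defs
  imports Main
begin

text \<open>Constants B,C,I,K,W,cc,A, p, q_i (i \<le> N is enforced by wf_trm),
  application, and the constants \<And>_i xi_i for sequences of closed terms.\<close>

datatype trm = TB | TC | TI | TK | TW | Tcc | TA | Tp | Tq nat
  | App trm trm | Conj "nat \<Rightarrow> trm"

primrec closed_trm :: "trm \<Rightarrow> bool" where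
  "closed_trm TB = True"
| "closed_trm TC = True"
| "closed_trm TI = True"
| "closed_trm TK = True"
| "closed_trm TW = True"
| "closed_trm Tcc = True"
| "closed_trm TA = True"
| "closed_trm Tp = False"
| "closed_trm (Tq i) = False"
| "closed_trm (App s t) = (closed_trm s \<and> closed_trm t)"
| "closed_trm (Conj f) = (\<forall>i. closed_trm (f i))"

text \<open>Membership in Lambda (for the fixed N): q_i only for i \<le> N, and
  the constants \<And>_i xi_i only for sequences of closed terms.\<close>
primrec wf_trm :: "nat \<Rightarrow> trm \<Rightarrow> bool" where
  "wf_trm N TB = True"
| "wf_trm N TC = True"
| "wf_trm N TI = True"
| "wf_trm N TK = True"
| "wf_trm N TW = True"
| "wf_trm N Tcc = True"
| "wf_trm N TA = True"
| "wf_trm N Tp = True"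
| "wf_trm N (Tq i) = (i \<le> N)"
| "wf_trm N (App s t) = (wf_trm N s \<and> wf_trm N t)"
| "wf_trm N (Conj f) = (\<forall>i. closed_trm (f i) \<and> wf_trm N (f i))"

type_synonym stack = "trm list"

text \<open>The set Pi of stacks (over Lambda); the empty list is pi_0.\<close>
definition Stacks :: "nat \<Rightarrow> stack set" where
  "Stacks N = {\<pi>. \<forall>t\<in>set \<pi>. wf_trm N t}"

definition ell :: "trm \<Rightarrow> trm" where
  "ell t = App (App TC (App (App TB TC) TB)) t"

primrec kont :: "stack \<Rightarrow> trm" where
  "kont [] = TA"
| "kont (t # \<pi>) = App (ell t) (kont \<pi>)"

definition sigma :: trm where
  "sigma = App (App TB TW) (App TC (App (App TB TB) TB))"

primrec num :: "nat \<Rightarrow> trm" where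
  "num 0 = App TK TI"
| "num (Suc n) = App sigma (num n)"

inductive step :: "trm \<times> stack \<Rightarrow> trm \<times> stack \<Rightarrow> bool" where
  s_app: "step (App \<xi> \<eta>, \<pi>) (\<xi>, \<eta> # \<pi>)"
| s_B: "step (TB, \<xi> # \<eta> # \<zeta> # \<pi>) (\<xi>, App \<eta> \<zeta> # \<pi>)"
| s_C: "step (TC, \<xi> # \<eta> # \<zeta> # \<pi>) (\<xi>, \<zeta> # \<eta> # \<pi>)"
| s_I: "step (TI, \<xi> # \<pi>) (\<xi>, \<pi>)"
| s_K: "step (TK, \<xi> # \<eta> # \<pi>) (\<xi>, \<pi>)"
| s_W: "step (TW, \<xi> # \<eta> # \<pi>) (\<xi>, \<eta> # \<eta> # \<pi>)"
| s_cc: "step (Tcc, \<xi> # \<pi>) (\<xi>, kont \<pi> # \<pi>)"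
| s_A: "step (TA, \<xi> # \<pi>) (\<xi>, [])"
| s_Conj: "step (Conj f, num n # \<pi>) (f n, \<pi>)"

definition exec :: "trm \<times> stack \<Rightarrow> trm \<times> stack \<Rightarrow> bool" where
  "exec = step\<^sup>*\<^sup>*"

definition pole :: "(trm \<times> stack) set" where
  "pole = {(\<xi>, \<pi>). \<exists>\<rho>. exec (\<xi>, \<pi>) (Tp, \<rho>)}"

definition realizes :: "trm \<Rightarrow> stack set \<Rightarrow> bool" where
  "realizes \<xi> P \<longleftrightarrow> (\<forall>\<pi>\<in>P. (\<xi>, \<pi>) \<in> pole)"

definition fbot :: "nat \<Rightarrow> stack set" where
  "fbot N = Stacks N"

definition farrow :: "nat \<Rightarrow> stack set \<Rightarrow> stack set \<Rightarrow> stack set" where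
  "farrow N P Q = {\<eta> # \<pi> | \<eta> \<pi>. wf_trm N \<eta> \<and> realizes \<eta> P \<and> \<pi> \<in> Q}"

definition fneg :: "nat \<Rightarrow> stack set \<Rightarrow> stack set" where
  "fneg N P = farrow N P (fbot N)"

definition fall :: "('a \<Rightarrow> stack set) \<Rightarrow> stack set" where
  "fall P = (\<Union>a. P a)"

definition fall_nat :: "(nat \<Rightarrow> stack set) \<Rightarrow> stack set" where
  "fall_nat P = {num n # \<pi> | n \<pi>. \<pi> \<in> P n}"

datatype lam = V nat | Ap lam lam | Lam nat lam | Cst trm
datatype cterm = CV nat | CAp cterm cterm | CT trm

primrec cfv :: "cterm \<Rightarrow> nat set" where
  "cfv (CV x) = {x}"
| "cfv (CAp s t) = cfv s \<union> cfv t"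
| "cfv (CT c) = {}"

text \<open>Bracket abstraction (weak-head correct: [x]t \<star> u.pi reduces to a
  process realizability-equivalent to t[u/x] \<star> pi).\<close>
primrec brk :: "nat \<Rightarrow> cterm \<Rightarrow> cterm" where
  "brk x (CV y) = (if y = x then CT TI else CAp (CT TK) (CV y))"
| "brk x (CT c) = CAp (CT TK) (CT c)"
| "brk x (CAp s t) =
     (if x \<notin> cfv s \<and> x \<notin> cfv t then CAp (CT TK) (CAp s t)
      else if t = CV x \<and> x \<notin> cfv s then s
      else if x \<notin> cfv t then CAp (CAp (CT TC) (brk x s)) t
      else if x \<notin> cfv s then CAp (CAp (CT TB) s) (brk x t)
      else CAp (CT TW) (CAp (CAp (CT TB) (CAp (CAp (CT TC) (CT TB)) (brk x t))) (brk x s)))"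

primrec tr :: "lam \<Rightarrow> cterm" where
  "tr (V x) = CV x"
| "tr (Ap s t) = CAp (tr s) (tr t)"
| "tr (Lam x t) = brk x (tr t)"
| "tr (Cst c) = CT c"

primrec to_trm :: "cterm \<Rightarrow> trm" where
  "to_trm (CV x) = TI"  (* never used on closed lambda-terms *)
| "to_trm (CAp s t) = App (to_trm s) (to_trm t)"
| "to_trm (CT c) = c"

definition lterm :: "lam \<Rightarrow> trm" where
  "lterm t = to_trm (tr t)"

definition l0 :: lam where "l0 = Lam 0 (Lam 1 (V 1))"
definition l1 :: lam where "l1 = Lam 0 (Lam 1 (V 0))"
definition la :: lam where "la = Lam 0 (Lam 1 (Ap (V 1) (V 0)))"

definition lless :: "lam \<Rightarrow> lam \<Rightarrow> lam" where
  "lless i k = Ap (Ap (Ap k la) (Lam 2 l0)) (Ap (Ap i la) (Lam 2 l1))"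

definition lchi :: lam where
  "lchi = Lam 10 (Lam 11 (Lam 12 (Lam 13
            (Ap (Ap (lless (V 13) (V 10)) (Ap (V 11) (V 13))) (V 12)))))"

definition chi :: trm where "chi = lterm lchi"

definition lX :: lam where
  "lX = Lam 20 (Lam 21 (Ap (V 21) (Ap (Ap (V 20) (V 20)) (V 21))))"
definition lY :: lam where "lY = Ap lX lX"

text \<open>Psi = \<lambda>g\<lambda>u(Y)\<lambda>h\<lambda>k\<lambda>f(u)(\<chi>kf)(g)\<lambda>z(hk+)(\<chi>)kfz, with k+ = (sigma)k;
  variables g=30,u=31,h=32,k=33,f=34,z=35.\<close>
definition lPsi :: lam where
  "lPsi = Lam 30 (Lam 31 (Ap lY (Lam 32 (Lam 33 (Lam 34
     (Ap (V 31)
        (Ap (Ap (Ap lchi (V 33)) (V 34))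
            (Ap (V 30)
                (Lam 35 (Ap (Ap (V 32) (Ap (Cst sigma) (V 33)))
                            (Ap (Ap (Ap lchi (V 33)) (V 34)) (V 35))))))))))))"

definition Psi :: trm where "Psi = lterm lPsi"

text \<open>The only property of the ground-model operation app(f,n) = {y : (n,y) \<in> f}
  (together with the embedding of the integers as ground-model sets) that is
  relevant: every finite sequence of sets is of the form f[0],...,f[k-1].
  This holds in any model of ZF.\<close>
definition app_interpolates :: "(nat \<Rightarrow> 'a) \<Rightarrow> ('a \<Rightarrow> 'a \<Rightarrow> 'a) \<Rightarrow> bool" where
  "app_interpolates emb app \<longleftrightarrow>
     (\<forall>(a :: nat \<Rightarrow> 'a) k. \<exists>f. \<forall>i<k. app f (emb i) = a i)"

end

theory Submission
  imports Defs
begin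

fun stepf :: "trm \<times> stack \<Rightarrow> (trm \<times> stack) option" where
  "stepf (App a b, \<pi>) = Some (a, b # \<pi>)"
| "stepf (TB, x # y # z # \<pi>) = Some (x, App y z # \<pi>)"
| "stepf (TC, x # y # z # \<pi>) = Some (x, z # y # \<pi>)"
| "stepf (TI, x # \<pi>) = Some (x, \<pi>)"
| "stepf (TK, x # y # \<pi>) = Some (x, \<pi>)"
| "stepf (TW, x # y # \<pi>) = Some (x, y # y # \<pi>)"
| "stepf _ = None"

lemma stepf_step: "stepf c = Some d \<Longrightarrow> step c d"
  by (induction c rule: stepf.induct) (auto intro: step.intros)

lemma exec_stepI: "stepf c = Some c' \<Longrightarrow> exec c' d \<Longrightarrow> exec c d"
  unfolding exec_def by (meson converse_rtranclp_into_rtranclp stepf_step)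

lemma exec_refl: "exec c c" unfolding exec_def by simp

lemma exec_trans: "exec a b \<Longrightarrow> exec b c \<Longrightarrow> exec a c"
  unfolding exec_def by (rule rtranclp_trans)

definition Xt :: trm where "Xt = (App (App TB TW) (App (App TC (App (App TB TB) (App (App TB (App TC TB)) (App TW (App (App TB (App (App TC TB) TI)) TI))))) TI))"
definition W1 :: trm where "W1 = App TW (App (App TB (App (App TC TB) TI)) TI)"
definition Th0 :: trm where "Th0 = App (App TB TW) (App (App TB (App TB (App (App TC TB) chi))) (App (App TB (App TB TB)) (App (App TB (App TB TB)) (App (App TC TB) sigma))))"
definition Z0 :: trm where "Z0 = App (App TC (App (App TB TB) (App (App TB TB) TB))) Th0"
definition Q :: trm where "Q = App (App TB (App TB (App TB TW))) (App (App TB (App TB TW)) (App (App TB (App TB (App TB (App (App TC TB) chi)))) (App (App TB (App TB (App TB TB))) (App (App TB (App TB (App TB (App TC TB)))) Z0))))"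
definition Mb :: trm where "Mb = App (App TB (App TC (App (App TB TB) (App (App TB TB) TB)))) Q"

lemma chi_eq: "chi = App (App TB (App TB TC))
      (App (App TB (App TB TW))
        (App (App TB (App TC (App (App TB TB) (App TC TB))))
          (App (App TC
                 (App (App TB TB)
                   (App (App TC (App (App TC TI) (App TC TI)))
                     (App TK (App TK TI)))))
            (App (App TC (App (App TC TI) (App TC TI))) (App TK TK)))))"
  unfolding chi_def lterm_def lchi_def lless_def la_def l0_def l1_def
  by simp

lemma Psi_eq: "Psi = App (App TB (App TB (App Xt Xt))) Mb"
  unfolding Psi_def lterm_def lPsi_def lchi_def lless_def lY_def lX_def la_def l0_def l1_def
    Xt_def Mb_def Q_def Z0_def Th0_def
  by (simp add: chi_eq)

lemma L1: "exec (App (App Psi G) U, K # Phi # \<rho>) (Xt, Xt # App (App Mb G) U # K # Phi # \<rho>)"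
  unfolding Psi_eq
  apply (rule exec_stepI, simp)+
  apply (rule exec_refl)
  done

lemma L2: "exec (Xt, x # M # \<rho>) (M, App (App W1 x) M # \<rho>)"
  unfolding Xt_def W1_def
  apply (rule exec_stepI, simp)+
  apply (rule exec_refl)
  done

lemma L3: "exec (App (App W1 x) M, \<rho>) (x, App TI x # M # \<rho>)"
  unfolding W1_def
  apply (rule exec_stepI, simp)+
  apply (rule exec_refl)
  done

lemma L4: "exec (App (App Mb G) U, T # K # Phi # \<rho>) (U, App (App (App (App Q G) T) K) Phi # \<rho>)"
  unfolding Mb_def
  apply (rule exec_stepI, simp)+
  apply (rule exec_refl)
  done

lemma L5: "exec (App (App (App (App Q G) T) K) Phi, N # \<rho>) (chi, K # Phi # App (App (App (App Z0 G) T) K) Phi # N # \<rho>)"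
  unfolding Q_def
  apply (rule exec_stepI, simp)+
  apply (rule exec_refl)
  done

lemma L6: "exec (chi, K # Phi # Z # N # \<rho>) (K, App TC TI # App TK (App TK TI) #
   App (App (App TC (App (App TC TI) (App TC TI))) (App TK TK)) N # App Phi N # Z # \<rho>)"
  unfolding chi_eq
  apply (rule exec_stepI, simp)+
  apply (rule exec_refl)
  done

lemma L8: "exec (App (App (App (App Z0 G) T) K) Phi, \<rho>) (G, App (App (App Th0 T) K) Phi # \<rho>)"
  unfolding Z0_def
  apply (rule exec_stepI, simp)+
  apply (rule exec_refl)
  done

lemma L9: "exec (App (App (App Th0 T) K) Phi, Zeta # \<rho>) (T, App sigma K # App (App (App chi K) Phi) Zeta # \<rho>)"
  unfolding Th0_def
  apply (rule exec_stepI, simp)+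
  apply (rule exec_refl)
  done

lemma L7:
  assumes "\<And>\<rho>. exec (A, \<rho>) (num i, App TC TI # App TK TK # \<rho>)"
  shows "exec (num k, App TC TI # App TK (App TK TI) # A # X # Y # \<rho>) (if i < k then X else Y, \<rho>)"
  using assms
proof (induction k arbitrary: i A)
  case 0
  show ?case
    apply simp
    apply (rule exec_stepI, simp)+
    apply (rule exec_refl)
    done
next
  case (Suc k)
  have 1: "exec (num (Suc k), App TC TI # App TK (App TK TI) # A # X # Y # \<rho>)
     (A, App (App (num k) (App TC TI)) (App TK (App TK TI)) # X # Y # \<rho>)"
    apply (simp add: sigma_def)
    apply (rule exec_stepI, simp)+
    apply (rule exec_refl)
    done
  have 2: "exec (A, App (App (num k) (App TC TI)) (App TK (App TK TI)) # X # Y # \<rho>)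
     (num i, App TC TI # App TK TK # App (App (num k) (App TC TI)) (App TK (App TK TI)) # X # Y # \<rho>)"
    by (rule Suc.prems)
  show ?case
  proof (cases i)
    case 0
    have "exec (num i, App TC TI # App TK TK # App (App (num k) (App TC TI)) (App TK (App TK TI)) # X # Y # \<rho>) (X, \<rho>)"
      unfolding 0
      apply simp
      apply (rule exec_stepI, simp)+
      apply (rule exec_refl)
      done
    then show ?thesis using 1 2 0 by (auto intro: exec_trans)
  next
    case (Suc j)
    have 3: "exec (num i, App TC TI # App TK TK # App (App (num k) (App TC TI)) (App TK (App TK TI)) # X # Y # \<rho>)
       (num k, App TC TI # App TK (App TK TI) # App (App (num j) (App TC TI)) (App TK TK) # X # Y # \<rho>)"
      unfolding Suc
      apply (simp add: sigma_def)
      apply (rule exec_stepI, simp)+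
      apply (rule exec_refl)
      done
    have 4: "exec (num k, App TC TI # App TK (App TK TI) # App (App (num j) (App TC TI)) (App TK TK) # X # Y # \<rho>)
       (if j < k then X else Y, \<rho>)"
    proof (rule Suc.IH)
      fix \<rho>'
      show "exec (App (App (num j) (App TC TI)) (App TK TK), \<rho>') (num j, App TC TI # App TK TK # \<rho>')"
        apply (rule exec_stepI, simp)+
        apply (rule exec_refl)
        done
    qed
    have "exec (num (Suc k), App TC TI # App TK (App TK TI) # A # X # Y # \<rho>) (if j < k then X else Y, \<rho>)"
      using exec_trans[OF exec_trans[OF exec_trans[OF 1 2] 3] 4] .
    then show ?thesis using Suc by simp
  qed
qed

lemma num_inj: "num n = num m \<Longrightarrow> n = m"
proof (induction n arbitrary: m)
  case 0 then show ?case by (cases m) (auto simp: sigma_def)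
next
  case (Suc n) then show ?case by (cases m) (auto simp: sigma_def)
qed

lemma step_det: "step c d \<Longrightarrow> step c e \<Longrightarrow> d = e"
  by (induction rule: step.induct) (auto elim: step.cases dest: num_inj)

lemma det_comp: "exec c d \<Longrightarrow> exec c e \<Longrightarrow> exec d e \<or> exec e d"
  unfolding exec_def
proof (induction arbitrary: e rule: converse_rtranclp_induct)
  case base then show ?case by simp
next
  case (step y z)
  from step.prems show ?case
  proof (cases rule: converse_rtranclpE)
    case base then show ?thesis using step.hyps
      by (meson converse_rtranclp_into_rtranclp)
  next
    case (step w)
    then have "w = z" using step_det \<open>step y z\<close> by blast
    then show ?thesis using step.IH step by blast
  qed
qed

lemma Tp_nostep: "\<not> step (Tp, \<rho>) d"
  by (auto elim: step.cases)

lemma pole_bwd: "exec c d \<Longrightarrow> d \<in> pole \<Longrightarrow> c \<in> pole"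
  unfolding pole_def by (auto intro: exec_trans)

lemma pole_fwd: "exec c d \<Longrightarrow> c \<in> pole \<Longrightarrow> d \<in> pole"
proof -
  assume a: "exec c d" "c \<in> pole"
  then obtain \<rho> where r: "exec c (Tp, \<rho>)" unfolding pole_def by auto
  from det_comp[OF a(1) r] show "d \<in> pole"
  proof
    assume "exec d (Tp, \<rho>)" then show ?thesis unfolding pole_def by auto
  next
    assume "exec (Tp, \<rho>) d"
    then have "d = (Tp, \<rho>)" unfolding exec_def
      by (cases rule: converse_rtranclpE) (auto simp: Tp_nostep)
    then show ?thesis unfolding pole_def by (auto intro: exec_refl)
  qed
qed

definition gd :: "trm \<Rightarrow> bool" where "gd x \<longleftrightarrow> (\<exists>i. x = (App TI ^^ i) Xt)"

lemma gd_iff: "gd x \<longleftrightarrow> x = Xt \<or> (\<exists>y. x = App TI y \<and> gd y)"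
  unfolding gd_def
proof
  assume "\<exists>i. x = (App TI ^^ i) Xt"
  then obtain i where "x = (App TI ^^ i) Xt" by blast
  then show "x = Xt \<or> (\<exists>y. x = App TI y \<and> (\<exists>i. y = (App TI ^^ i) Xt))"
    by (cases i) auto
next
  assume "x = Xt \<or> (\<exists>y. x = App TI y \<and> (\<exists>i. y = (App TI ^^ i) Xt))"
  then show "\<exists>i. x = (App TI ^^ i) Xt"
  proof
    assume "x = Xt" then show ?thesis by (metis funpow_0)
  next
    assume "\<exists>y. x = App TI y \<and> (\<exists>i. y = (App TI ^^ i) Xt)"
    then obtain y i where "x = App TI y" "y = (App TI ^^ i) Xt" by blast
    then show ?thesis by (intro exI[of _ "Suc i"]) simp
  qed
qed

lemma gd_Xt: "gd Xt" unfolding gd_def by (metis funpow_0)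
lemma gd_ITI: "gd x \<Longrightarrow> gd (App TI x)" by (subst gd_iff) simp

lemma gd_exec: "gd x \<Longrightarrow> exec (x, \<pi>) (Xt, \<pi>)"
proof -
  assume "gd x"
  then obtain i where "x = (App TI ^^ i) Xt" unfolding gd_def by blast
  then show ?thesis
  proof (induction i arbitrary: x)
    case 0 then show ?case by (simp add: exec_refl)
  next
    case (Suc i)
    have "exec (x, \<pi>) ((App TI ^^ i) Xt, \<pi>)"
      unfolding Suc.prems
      apply simp
      apply (rule exec_stepI, simp)+
      apply (rule exec_refl)
      done
    then show ?case using Suc.IH by (blast intro: exec_trans)
  qed
qed

fun ngd :: "trm \<Rightarrow> bool" where
  "ngd (App a b) = (App a b \<noteq> Xt \<and> a \<noteq> TI \<and> ngd a \<and> ngd b)"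
| "ngd _ = True"

lemma Xt_neq: "App a b = Xt \<longleftrightarrow> a = App TB TW \<and> b = App (App TC (App (App TB TB) (App (App TB (App TC TB)) (App TW (App (App TB (App (App TC TB) TI)) TI))))) TI"
  by (auto simp: Xt_def)

lemma ngd_Xt: "\<not> ngd Xt" by (simp add: Xt_def)

lemma ngd_not_gd: "ngd t \<Longrightarrow> \<not> gd t"
proof
  assume n: "ngd t" and "gd t"
  then have "t = Xt \<or> (\<exists>y. t = App TI y \<and> gd y)" by (simp add: gd_iff[of t])
  then show False using n ngd_Xt by auto
qed

inductive Rt :: "trm \<Rightarrow> trm \<Rightarrow> bool" where
  refl: "Rt t t"
| app: "Rt a a' \<Longrightarrow> Rt b b' \<Longrightarrow> Rt (App a b) (App a' b')"
| good: "gd x \<Longrightarrow> gd y \<Longrightarrow> Rt x y"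

lemma Rt_ngd: "Rt s t \<Longrightarrow> ngd s \<Longrightarrow> t = s"
  by (induction rule: Rt.induct) (auto dest: ngd_not_gd)

lemma Rt_ngd_iff[simp]: "ngd s \<Longrightarrow> Rt s t \<longleftrightarrow> t = s"
  using Rt_ngd Rt.refl by blast

lemma ngd_sigma[simp]: "ngd sigma" by (simp add: sigma_def Xt_neq)

lemma ngd_num[simp]: "ngd (num n)"
  by (induction n) (auto simp: Xt_neq sigma_def)

lemma Rt_gd: "Rt s t \<Longrightarrow> gd s \<Longrightarrow> gd t"
proof (induction rule: Rt.induct)
  case (refl t) then show ?case .
next
  case (app a a' b b')
  from app.prems have "App a b = Xt \<or> (a = TI \<and> gd b)" by (subst (asm) gd_iff) auto
  then show ?case
  proof
    assume X: "App a b = Xt"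
    then have "ngd a" "ngd b" by (auto simp: Xt_neq)
    then have "a' = a" "b' = b" using app.hyps Rt_ngd by auto
    then show ?thesis using X gd_Xt by simp
  next
    assume "a = TI \<and> gd b"
    then have "a' = TI" "gd b'" using app by auto
    then show ?thesis by (simp add: gd_ITI)
  qed
next
  case (good x y) then show ?case by simp
qed

lemma Rt_App: "Rt (App a b) t \<Longrightarrow> \<not> gd (App a b) \<Longrightarrow> \<exists>a' b'. t = App a' b' \<and> Rt a a' \<and> Rt b b'"
  by (cases rule: Rt.cases) (auto intro: Rt.refl)

lemma kont_Rt: "list_all2 Rt \<pi>1 \<pi>2 \<Longrightarrow> Rt (kont \<pi>1) (kont \<pi>2)"
  by (induction rule: list_all2_induct) (auto simp: ell_def intro!: Rt.app Rt.refl)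

definition Rc :: "trm \<times> stack \<Rightarrow> trm \<times> stack \<Rightarrow> bool" where
  "Rc c1 c2 \<longleftrightarrow> Rt (fst c1) (fst c2) \<and> list_all2 Rt (snd c1) (snd c2)"

definition Rce :: "trm \<times> stack \<Rightarrow> trm \<times> stack \<Rightarrow> bool" where
  "Rce c1 c2 \<longleftrightarrow> Rc c1 c2 \<or> (\<exists>x \<pi>. c1 = (TI, x # \<pi>) \<and> Rc (x, \<pi>) c2)"

lemma exec1: "step c d \<Longrightarrow> exec c d" unfolding exec_def by simp

lemma sim_ngd:
  assumes st: "step (t1, \<pi>1) d1" and ng: "\<not> gd t1" and R: "Rt t1 t2" and L: "list_all2 Rt \<pi>1 \<pi>2"
  shows "\<exists>d2. exec (t2, \<pi>2) d2 \<and> Rc d1 d2"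
  using st
proof (cases rule: step.cases)
  case (s_app \<xi> \<eta>)
  then obtain a' b' where ab: "t2 = App a' b'" "Rt \<xi> a'" "Rt \<eta> b'" using Rt_App R ng by blast
  have "exec (t2, \<pi>2) (a', b' # \<pi>2)" unfolding ab(1) by (rule exec1, rule step.s_app)
  moreover have "Rc d1 (a', b' # \<pi>2)" using s_app ab L by (simp add: Rc_def)
  ultimately show ?thesis by blast
next
  case (s_B \<xi> \<eta> \<zeta> \<pi>)
  then obtain \<xi>' \<eta>' \<zeta>' \<pi>' where p: "\<pi>2 = \<xi>' # \<eta>' # \<zeta>' # \<pi>'" "Rt \<xi> \<xi>'" "Rt \<eta> \<eta>'" "Rt \<zeta> \<zeta>'" "list_all2 Rt \<pi> \<pi>'"
    using L by (auto simp: list_all2_Cons1)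
  have t2: "t2 = TB" using R s_B by simp
  have "exec (t2, \<pi>2) (\<xi>', App \<eta>' \<zeta>' # \<pi>')" unfolding t2 p(1) by (rule exec1, rule step.s_B)
  moreover have "Rc d1 (\<xi>', App \<eta>' \<zeta>' # \<pi>')" using s_B p by (simp add: Rc_def Rt.app)
  ultimately show ?thesis by blast
next
  case (s_C \<xi> \<eta> \<zeta> \<pi>)
  then obtain \<xi>' \<eta>' \<zeta>' \<pi>' where p: "\<pi>2 = \<xi>' # \<eta>' # \<zeta>' # \<pi>'" "Rt \<xi> \<xi>'" "Rt \<eta> \<eta>'" "Rt \<zeta> \<zeta>'" "list_all2 Rt \<pi> \<pi>'"
    using L by (auto simp: list_all2_Cons1)
  have t2: "t2 = TC" using R s_C by simp
  have "exec (t2, \<pi>2) (\<xi>', \<zeta>' # \<eta>' # \<pi>')" unfolding t2 p(1) by (rule exec1, rule step.s_C)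
  moreover have "Rc d1 (\<xi>', \<zeta>' # \<eta>' # \<pi>')" using s_C p by (simp add: Rc_def)
  ultimately show ?thesis by blast
next
  case (s_I \<xi> \<pi>)
  then obtain \<xi>' \<pi>' where p: "\<pi>2 = \<xi>' # \<pi>'" "Rt \<xi> \<xi>'" "list_all2 Rt \<pi> \<pi>'"
    using L by (auto simp: list_all2_Cons1)
  have t2: "t2 = TI" using R s_I by simp
  have "exec (t2, \<pi>2) (\<xi>', \<pi>')" unfolding t2 p(1) by (rule exec1, rule step.s_I)
  moreover have "Rc d1 (\<xi>', \<pi>')" using s_I p by (simp add: Rc_def)
  ultimately show ?thesis by blast
next
  case (s_K \<xi> \<eta> \<pi>)
  then obtain \<xi>' \<eta>' \<pi>' where p: "\<pi>2 = \<xi>' # \<eta>' # \<pi>'" "Rt \<xi> \<xi>'" "list_all2 Rt \<pi> \<pi>'"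
    using L by (auto simp: list_all2_Cons1)
  have t2: "t2 = TK" using R s_K by simp
  have "exec (t2, \<pi>2) (\<xi>', \<pi>')" unfolding t2 p(1) by (rule exec1, rule step.s_K)
  moreover have "Rc d1 (\<xi>', \<pi>')" using s_K p by (simp add: Rc_def)
  ultimately show ?thesis by blast
next
  case (s_W \<xi> \<eta> \<pi>)
  then obtain \<xi>' \<eta>' \<pi>' where p: "\<pi>2 = \<xi>' # \<eta>' # \<pi>'" "Rt \<xi> \<xi>'" "Rt \<eta> \<eta>'" "list_all2 Rt \<pi> \<pi>'"
    using L by (auto simp: list_all2_Cons1)
  have t2: "t2 = TW" using R s_W by simp
  have "exec (t2, \<pi>2) (\<xi>', \<eta>' # \<eta>' # \<pi>')" unfolding t2 p(1) by (rule exec1, rule step.s_W)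
  moreover have "Rc d1 (\<xi>', \<eta>' # \<eta>' # \<pi>')" using s_W p by (simp add: Rc_def)
  ultimately show ?thesis by blast
next
  case (s_cc \<xi> \<pi>)
  then obtain \<xi>' \<pi>' where p: "\<pi>2 = \<xi>' # \<pi>'" "Rt \<xi> \<xi>'" "list_all2 Rt \<pi> \<pi>'"
    using L by (auto simp: list_all2_Cons1)
  have t2: "t2 = Tcc" using R s_cc by simp
  have "exec (t2, \<pi>2) (\<xi>', kont \<pi>' # \<pi>')" unfolding t2 p(1) by (rule exec1, rule step.s_cc)
  moreover have "Rc d1 (\<xi>', kont \<pi>' # \<pi>')" using s_cc p kont_Rt by (simp add: Rc_def)
  ultimately show ?thesis by blast
next
  case (s_A \<xi> \<pi>)
  then obtain \<xi>' \<pi>' where p: "\<pi>2 = \<xi>' # \<pi>'" "Rt \<xi> \<xi>'" "list_all2 Rt \<pi> \<pi>'"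
    using L by (auto simp: list_all2_Cons1)
  have t2: "t2 = TA" using R s_A by simp
  have "exec (t2, \<pi>2) (\<xi>', [])" unfolding t2 p(1) by (rule exec1, rule step.s_A)
  moreover have "Rc d1 (\<xi>', [])" using s_A p by (simp add: Rc_def)
  ultimately show ?thesis by blast
next
  case (s_Conj f n \<pi>)
  then obtain y \<pi>' where p: "\<pi>2 = y # \<pi>'" "Rt (num n) y" "list_all2 Rt \<pi> \<pi>'"
    using L by (auto simp: list_all2_Cons1)
  have y: "y = num n" using p(2) by simp
  have t2: "t2 = Conj f" using R s_Conj by simp
  have "exec (t2, \<pi>2) (f n, \<pi>')" unfolding t2 p(1) y by (rule exec1, rule step.s_Conj)
  moreover have "Rc d1 (f n, \<pi>')" using s_Conj p by (simp add: Rc_def Rt.refl)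
  ultimately show ?thesis by blast
qed

lemma Xt_split: "Xt = App (App TB TW) (App (App TC (App (App TB TB) (App (App TB (App TC TB)) (App TW (App (App TB (App (App TC TB) TI)) TI))))) TI)"
  by (simp add: Xt_def)

lemma sim:
  assumes st: "step c1 d1" and R: "Rce c1 c2"
  shows "\<exists>d2. exec c2 d2 \<and> Rce d1 d2"
proof -
  obtain t1 \<pi>1 where c1: "c1 = (t1, \<pi>1)" by force
  obtain t2 \<pi>2 where c2: "c2 = (t2, \<pi>2)" by force
  from R[unfolded Rce_def] show ?thesis
  proof
    assume Rc: "Rc c1 c2"
    then have R1: "Rt t1 t2" and L: "list_all2 Rt \<pi>1 \<pi>2" using c1 c2 by (auto simp: Rc_def)
    show ?thesis
    proof (cases "gd t1")
      case False
      then show ?thesis using sim_ngd[OF st[unfolded c1] False R1 L] c2 unfolding Rce_def by blast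
    next
      case True
      then have g2: "gd t2" using Rt_gd R1 by blast
      from True have "t1 = Xt \<or> (\<exists>y. t1 = App TI y \<and> gd y)" by (simp add: gd_iff[of t1])
      then show ?thesis
      proof
        assume "t1 = Xt"
        obtain XA XB where XX: "Xt = App XA XB" using Xt_split by blast
        have "step (App XA XB, \<pi>1) (XA, XB # \<pi>1)" by (rule step.s_app)
        then have d1: "d1 = (XA, XB # \<pi>1)" using st c1 \<open>t1 = Xt\<close> XX step_det by metis
        have "exec (t2, \<pi>2) (Xt, \<pi>2)" using g2 gd_exec by blast
        moreover have "exec (Xt, \<pi>2) (XA, XB # \<pi>2)" unfolding XX by (rule exec1, rule step.s_app)
        ultimately have "exec c2 (XA, XB # \<pi>2)" using c2 exec_trans by blast
        moreover have "Rce d1 (XA, XB # \<pi>2)" using d1 L unfolding Rce_def Rc_def by (auto intro: Rt.refl)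
        ultimately show ?thesis by blast
      next
        assume "\<exists>y. t1 = App TI y \<and> gd y"
        then obtain y where y: "t1 = App TI y" "gd y" by blast
        have "step (App TI y, \<pi>1) (TI, y # \<pi>1)" by (rule step.s_app)
        then have "d1 = (TI, y # \<pi>1)" using st c1 y step_det by blast
        moreover have "Rc (y, \<pi>1) c2" using y g2 L c2 by (auto simp: Rc_def intro: Rt.good)
        ultimately show ?thesis using exec_refl unfolding Rce_def by blast
      qed
    qed
  next
    assume "\<exists>x \<pi>. c1 = (TI, x # \<pi>) \<and> Rc (x, \<pi>) c2"
    then obtain x \<pi> where "c1 = (TI, x # \<pi>)" "Rc (x, \<pi>) c2" by blast
    moreover have "step (TI, x # \<pi>) (x, \<pi>)" by (rule step.s_I)
    ultimately have "d1 = (x, \<pi>)" using st step_det by blast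
    then show ?thesis using \<open>Rc (x, \<pi>) c2\<close> exec_refl unfolding Rce_def by blast
  qed
qed

lemma sim_pole:
  assumes "exec c1 (Tp, \<rho>)" "Rce c1 c2"
  shows "c2 \<in> pole"
  using assms unfolding exec_def
proof (induction arbitrary: c2 rule: converse_rtranclp_induct)
  case base
  obtain t2 \<pi>2 where c2: "c2 = (t2, \<pi>2)" by force
  from base have "Rt Tp t2" unfolding Rce_def Rc_def c2 by auto
  then have "t2 = Tp" by simp
  then show ?case unfolding c2 pole_def by (auto intro: exec_refl)
next
  case (step y z)
  from sim[OF step.hyps(1) step.prems] obtain d2 where "exec c2 d2" "Rce z d2" by blast
  then show ?case using step.IH pole_bwd by blast
qed

lemma wf_num: "wf_trm N (num n)"
  by (induction n) (auto simp: sigma_def)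

lemma wf_chi: "wf_trm N chi" by (simp add: chi_eq)

lemma wf_consts: "wf_trm N Xt" "wf_trm N W1" "wf_trm N Th0" "wf_trm N Z0" "wf_trm N Q" "wf_trm N Mb" "wf_trm N sigma"
  by (simp_all add: Xt_def W1_def Th0_def Z0_def Q_def Mb_def sigma_def wf_chi)

lemma L7': "exec (App (App (App TC (App (App TC TI) (App TC TI))) (App TK TK)) (num i), \<rho>) (num i, App TC TI # App TK TK # \<rho>)"
  apply (rule exec_stepI, simp)+
  apply (rule exec_refl)
  done

lemma e1: "exec (App (App (App (App Psi G) U) K) Phi, \<pi>)
  (U, App (App (App (App Q G) (App (App W1 Xt) (App (App Mb G) U))) K) Phi # \<pi>)"
proof -
  have "exec (App (App (App (App Psi G) U) K) Phi, \<pi>) (App (App Psi G) U, K # Phi # \<pi>)"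
    apply (rule exec_stepI, simp)
    apply (rule exec_stepI, simp)
    apply (rule exec_refl)
    done
  then show ?thesis using L1 L2 L4 exec_trans by meson
qed

lemma e2: "exec (App (App (App (App Psi G) U) K) X, \<rho>) (Xt, Xt # App (App Mb G) U # K # X # \<rho>)"
proof -
  have "exec (App (App (App (App Psi G) U) K) X, \<rho>) (App (App Psi G) U, K # X # \<rho>)"
    apply (rule exec_stepI, simp)
    apply (rule exec_stepI, simp)
    apply (rule exec_refl)
    done
  then show ?thesis using L1 exec_trans by meson
qed

lemma e3: "exec (App (App (App Th0 (App (App W1 Xt) M)) K) Phi, Zeta # \<rho>)
   (Xt, App TI Xt # M # App sigma K # App (App (App chi K) Phi) Zeta # \<rho>)"
  using L9 L3 exec_trans by meson

lemma e4: "exec (App (App (App (App Q G) T) (num k)) Phi, num n # \<rho>)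
   (if n < k then App Phi (num n) else App (App (App (App Z0 G) T) (num k)) Phi, \<rho>)"
proof -
  have "exec (num k, App TC TI # App TK (App TK TI) #
   App (App (App TC (App (App TC TI) (App TC TI))) (App TK TK)) (num n) # App Phi (num n) #
     App (App (App (App Z0 G) T) (num k)) Phi # \<rho>)
   (if n < k then App Phi (num n) else App (App (App (App Z0 G) T) (num k)) Phi, \<rho>)"
    by (rule L7) (rule L7')
  then show ?thesis using L5 L6 exec_trans by meson
qed

lemma Rce_XI: "Rce (Xt, Xt # S) (Xt, App TI Xt # S)"
  unfolding Rce_def Rc_def
  by (auto intro!: Rt.refl Rt.good gd_Xt gd_ITI list_all2_refl)

theorem lemma5:
  fixes N :: nat
    and Fv :: "'a \<Rightarrow> 'a \<Rightarrow> stack set"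
    and emb :: "nat \<Rightarrow> 'a"
    and app :: "'a \<Rightarrow> 'a \<Rightarrow> 'a"
    and G U \<phi> :: trm
    and k :: nat
  assumes Fv_stacks: "\<forall>n x. Fv n x \<subseteq> Stacks N"
    and app_ground: "app_interpolates emb app"
    and G_in: "wf_trm N G" and U_in: "wf_trm N U" and \<phi>_in: "wf_trm N \<phi>"
    and G_real: "realizes G (fall (\<lambda>n. fneg N (fall (\<lambda>x. fneg N (Fv n x)))))"
    and U_real: "realizes U (fall (\<lambda>f. fneg N (fall_nat (\<lambda>n. Fv (emb n) (app f (emb n))))))"
    and \<phi>_real: "\<forall>i<k. \<exists>a. realizes (App \<phi> (num i)) (Fv (emb i) a)"
    and nonbot: "\<not> realizes (App (App (App (App Psi G) U) (num k)) \<phi>) (fbot N)"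
  shows "\<exists>a \<zeta>. wf_trm N \<zeta> \<and> realizes \<zeta> (Fv (emb k) a) \<and>
           \<not> realizes (App (App (App (App Psi G) U) (App sigma (num k)))
                           (App (App (App chi (num k)) \<phi>) \<zeta>)) (fbot N)"
proof (rule ccontr)
  assume neg: "\<not> ?thesis"
  have hyp: "(App (App (App (App Psi G) U) (App sigma (num k))) (App (App (App chi (num k)) \<phi>) \<zeta>), \<rho>) \<in> pole"
    if "wf_trm N \<zeta>" "realizes \<zeta> (Fv (emb k) a)" "\<rho> \<in> Stacks N" for \<zeta> a \<rho>
  proof -
    have "realizes (App (App (App (App Psi G) U) (App sigma (num k))) (App (App (App chi (num k)) \<phi>) \<zeta>)) (fbot N)"
      using neg that(1,2) by blast
    then show ?thesis using that(3) by (simp add: realizes_def fbot_def)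
  qed
  define M where "M = App (App Mb G) U"
  define T0 where "T0 = App (App W1 Xt) M"
  define Xi where "Xi = App (App (App (App Q G) T0) (num k)) \<phi>"
  define Z where "Z = App (App (App (App Z0 G) T0) (num k)) \<phi>"
  define \<theta> where "\<theta> = App (App (App Th0 T0) (num k)) \<phi>"
  have wf_th: "wf_trm N \<theta>" and wf_Xi: "wf_trm N Xi"
    unfolding \<theta>_def Xi_def T0_def M_def using G_in U_in \<phi>_in
    by (simp_all add: wf_consts wf_num)
  have th_real: "realizes \<theta> (fall (\<lambda>x. fneg N (Fv (emb k) x)))"
    unfolding realizes_def
  proof
    fix \<pi>' assume "\<pi>' \<in> fall (\<lambda>x. fneg N (Fv (emb k) x))"
    then obtain x where "\<pi>' \<in> fneg N (Fv (emb k) x)" unfolding fall_def by blast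
    then obtain \<zeta> \<rho> where p: "\<pi>' = \<zeta> # \<rho>" "wf_trm N \<zeta>" "realizes \<zeta> (Fv (emb k) x)" "\<rho> \<in> Stacks N"
      unfolding fneg_def farrow_def fbot_def by blast
    let ?X = "App (App (App chi (num k)) \<phi>) \<zeta>"
    have "(App (App (App (App Psi G) U) (App sigma (num k))) ?X, \<rho>) \<in> pole"
      using hyp p by blast
    then have "(Xt, Xt # M # App sigma (num k) # ?X # \<rho>) \<in> pole"
      unfolding M_def by (rule pole_fwd[OF e2])
    then obtain \<rho>0 where "exec (Xt, Xt # M # App sigma (num k) # ?X # \<rho>) (Tp, \<rho>0)"
      unfolding pole_def by blast
    then have "(Xt, App TI Xt # M # App sigma (num k) # ?X # \<rho>) \<in> pole"
      by (rule sim_pole[OF _ Rce_XI])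
    then show "(\<theta>, \<pi>') \<in> pole"
      unfolding p(1) \<theta>_def T0_def by (rule pole_bwd[OF e3])
  qed
  have G_th: "(G, \<theta> # \<rho>) \<in> pole" if "\<rho> \<in> Stacks N" for \<rho>
  proof -
    have "\<theta> # \<rho> \<in> fneg N (fall (\<lambda>x. fneg N (Fv (emb k) x)))"
      unfolding fneg_def[of N "fall (\<lambda>x. fneg N (Fv (emb k) x))"] farrow_def fbot_def
      using wf_th th_real that by simp
    then have "\<theta> # \<rho> \<in> fall (\<lambda>n. fneg N (fall (\<lambda>x. fneg N (Fv n x))))"
      unfolding fall_def by (rule UN_I[OF UNIV_I])
    then show ?thesis by (rule bspec[OF G_real[unfolded realizes_def]])
  qed
  define a where "a i = (SOME x. realizes (App \<phi> (num i)) (Fv (emb i) x))" for i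
  have aprop: "realizes (App \<phi> (num i)) (Fv (emb i) (a i))" if "i < k" for i
    unfolding a_def using \<phi>_real that by (metis someI_ex)
  have "\<exists>f. \<forall>i<k. app f (emb i) = a i"
    using app_ground[unfolded app_interpolates_def, THEN spec[of _ a], THEN spec[of _ k]] .
  then obtain f where f: "\<forall>i<k. app f (emb i) = a i" by blast
  have Xi_real: "realizes Xi (fall_nat (\<lambda>n. Fv (emb n) (app f (emb n))))"
    unfolding realizes_def
  proof
    fix \<pi>' assume "\<pi>' \<in> fall_nat (\<lambda>n. Fv (emb n) (app f (emb n)))"
    then obtain n \<rho> where p: "\<pi>' = num n # \<rho>" "\<rho> \<in> Fv (emb n) (app f (emb n))"
      unfolding fall_nat_def by blast
    have "(if n < k then App \<phi> (num n) else Z, \<rho>) \<in> pole"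
    proof (cases "n < k")
      case True
      then have "\<rho> \<in> Fv (emb n) (a n)" using p f by simp
      then show ?thesis using True aprop unfolding realizes_def by simp
    next
      case False
      have "\<rho> \<in> Stacks N" using p Fv_stacks by blast
      then have "(G, \<theta> # \<rho>) \<in> pole" by (rule G_th)
      then have "(Z, \<rho>) \<in> pole" unfolding Z_def \<theta>_def by (rule pole_bwd[OF L8])
      then show ?thesis using False by simp
    qed
    then show "(Xi, \<pi>') \<in> pole" unfolding p(1) Xi_def Z_def by (rule pole_bwd[OF e4])
  qed
  obtain \<pi> where \<pi>: "\<pi> \<in> Stacks N" "(App (App (App (App Psi G) U) (num k)) \<phi>, \<pi>) \<notin> pole"
    using nonbot unfolding realizes_def fbot_def by blast
  have "Xi # \<pi> \<in> fneg N (fall_nat (\<lambda>n. Fv (emb n) (app f (emb n))))"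
    by (simp add: fneg_def farrow_def fbot_def wf_Xi Xi_real \<pi>(1))
  then have "Xi # \<pi> \<in> fall (\<lambda>f. fneg N (fall_nat (\<lambda>n. Fv (emb n) (app f (emb n)))))"
    unfolding fall_def by (rule UN_I[OF UNIV_I])
  then have "(U, Xi # \<pi>) \<in> pole" by (rule bspec[OF U_real[unfolded realizes_def]])
  then have "(App (App (App (App Psi G) U) (num k)) \<phi>, \<pi>) \<in> pole"
    unfolding Xi_def T0_def M_def by (rule pole_bwd[OF e1])
  then show False using \<pi>(2) by blast
qed

end
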